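(* Let $D$ be a direct tract of $f$, let $M_D(r)=\max_{|z|=r,\,z\in D}|f(z)|$, and let $\rho_0>R$ be such that $M_D(\rho)>\rho$ for all $\rho>\rho_0$. Then for every $\rho>\rho_0$ all components of $$A(f,D,\rho)=\{z\in D: f^n(z)\in D\text{ and }|f^n(z)|\ge M_D^n(\rho)\text{ for all }n\in\mathbb{N}\}$$ are unbounded.
   Context: A direct tract of $f$: $D$ is an unbounded domain with piecewise smooth boundary curves and unbounded complement; $f$ is defined on $\overline{D}$, holomorphic in $D$, continuous on $\overline{D}$, and there is $R>0$ with $|f|=R$ on $\partial D$ and $|f|>R$ in $D$. $M_D^n$ denotes the $n$-th iterate of $M_D$. *)

theory Defs
  imports "HOL-Complex_Analysis.Complex_Analysis"
begin

text \<open>Each boundary component of D is a curve, parametrized over the real line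
(covering both unbounded arcs and closed curves), that is piecewise smooth
on every compact parameter interval.\<close>
definition piecewise_smooth_boundary :: "complex set \<Rightarrow> bool" where
  "piecewise_smooth_boundary D \<longleftrightarrow>
     (\<forall>C \<in> components (frontier D). \<exists>\<gamma> :: real \<Rightarrow> complex.
        range \<gamma> = C \<and> (\<forall>a b. \<gamma> piecewise_C1_differentiable_on {a..b}))"

definition direct_tract :: "(complex \<Rightarrow> complex) \<Rightarrow> complex set \<Rightarrow> real \<Rightarrow> bool" where
  "direct_tract f D R \<longleftrightarrow>
     open D \<and> connected D \<and> \<not> bounded D \<and> \<not> bounded (- D) \<and>
     piecewise_smooth_boundary D \<and>
     f holomorphic_on D \<and> continuous_on (closure D) f \<and>
     R > 0 \<and> (\<forall>z \<in> frontier D. norm (f z) = R) \<and> (\<forall>z \<in> D. norm (f z) > R)"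

definition MD :: "(complex \<Rightarrow> complex) \<Rightarrow> complex set \<Rightarrow> real \<Rightarrow> real" where
  "MD f D r = Sup ((\<lambda>z. norm (f z)) ` (D \<inter> sphere 0 r))"

definition A_tract :: "(complex \<Rightarrow> complex) \<Rightarrow> complex set \<Rightarrow> real \<Rightarrow> complex set" where
  "A_tract f D \<rho> = {z \<in> D. \<forall>n::nat. n \<ge> 1 \<longrightarrow>
       (f ^^ n) z \<in> D \<and> norm ((f ^^ n) z) \<ge> (MD f D ^^ n) \<rho>}"

end

theory Submission
  imports Defs
begin

lemma dt_facts:
  assumes "direct_tract f D R"
  shows "open D" "connected D" "f holomorphic_on D" "continuous_on (closure D) f"
    "\<And>z. z \<in> frontier D \<Longrightarrow> norm (f z) = R" "\<And>z. z \<in> D \<Longrightarrow> norm (f z) > R"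
    "\<not> bounded D" "\<not> bounded (- D)" "R > 0"
  using assms unfolding direct_tract_def by auto

lemma closure_notin_D:
  assumes "direct_tract f D R" "w \<in> closure D" "w \<notin> D"
  shows "norm (f w) = R"
proof -
  have "w \<in> frontier D" using assms dt_facts(1)[OF assms(1)]
    by (simp add: frontier_def interior_open)
  then show ?thesis using dt_facts(5)[OF assms(1)] by blast
qed

lemma closure_in_D:
  assumes "direct_tract f D R" "w \<in> closure D" "norm (f w) > R"
  shows "w \<in> D"
  using closure_notin_D[OF assms(1,2)] assms(3) by force

lemma MD_bdd:
  assumes "direct_tract f D R"
  shows "bdd_above ((\<lambda>z. norm (f z)) ` (D \<inter> sphere 0 r))"
proof -
  have "compact (closure D \<inter> sphere 0 r)" by (rule closed_Int_compact) auto
  moreover have "continuous_on (closure D \<inter> sphere 0 r) (\<lambda>z. norm (f z))"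
    by (intro continuous_on_norm continuous_on_subset[OF dt_facts(4)[OF assms]]) auto
  ultimately have "compact ((\<lambda>z. norm (f z)) ` (closure D \<inter> sphere 0 r))"
    using compact_continuous_image by blast
  then have "bdd_above ((\<lambda>z. norm (f z)) ` (closure D \<inter> sphere 0 r))"
    by (simp add: bounded_imp_bdd_above compact_imp_bounded)
  then show ?thesis
    by (rule bdd_above_mono) (use closure_subset in auto)
qed

lemma MM_weak:
  assumes dt: "direct_tract f D R" and RM: "R < MD f D r" and z: "z \<in> D" "norm z \<le> r"
  shows "norm (f z) \<le> MD f D r"
proof (cases "norm z = r")
  case True
  then show ?thesis unfolding MD_def
    by (intro cSup_upper MD_bdd[OF dt]) (use z in auto)
next
  case False
  note D = dt_facts[OF dt]
  let ?S = "D \<inter> ball 0 r"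
  have zS: "z \<in> ?S" using z False by auto
  show ?thesis
  proof (rule maximum_modulus_frontier[of f ?S])
    show "f holomorphic_on interior ?S"
      using D(3) by (simp add: interior_open D(1) open_Int holomorphic_on_subset)
    show "continuous_on (closure ?S) f"
      by (rule continuous_on_subset[OF D(4)]) (simp add: closure_mono)
    show "bounded ?S" by (simp add: bounded_Int)
    show "z \<in> ?S" by (rule zS)
    fix w assume w: "w \<in> frontier ?S"
    have wc: "w \<in> closure D" "w \<in> cball 0 r"
    proof -
      have "closure ?S \<subseteq> cball 0 r"
        by (rule closure_minimal) auto
      then show "w \<in> closure D" "w \<in> cball 0 r"
        using w closure_mono[of ?S D] unfolding frontier_def by auto
    qed
    have wnS: "w \<notin> ?S" using w by (simp add: frontier_def interior_open D(1) open_Int)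
    show "norm (f w) \<le> MD f D r"
    proof (cases "w \<in> D")
      case True
      then have "norm w = r" using wc wnS by auto
      then show ?thesis unfolding MD_def
        by (intro cSup_upper MD_bdd[OF dt]) (use True in auto)
    next
      case False
      then show ?thesis using closure_notin_D[OF dt wc(1) False] RM by simp
    qed
  qed
qed

lemma MM_strict:
  assumes dt: "direct_tract f D R" and RM: "R < MD f D r" and z: "z \<in> D" "norm z < r"
  shows "norm (f z) < MD f D r"
proof (rule ccontr)
  assume "\<not> ?thesis"
  then have ge: "norm (f z) \<ge> MD f D r" by simp
  note D = dt_facts[OF dt]
  have "f constant_on D"
  proof (rule maximum_modulus_principle[of f D "D \<inter> ball 0 r" z])
    show "\<And>w. w \<in> D \<inter> ball 0 r \<Longrightarrow> norm (f w) \<le> norm (f z)"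
      using MM_weak[OF dt RM] ge by force
  qed (use D z in auto)
  then obtain c where c: "\<And>w. w \<in> D \<Longrightarrow> f w = c" by (auto simp: constant_on_def)
  have "D \<noteq> {}" using D(7) by auto
  moreover have "D \<noteq> UNIV" using D(8) by auto
  ultimately obtain p where p: "p \<in> frontier D" using frontier_not_empty by blast
  then have "p \<in> closure D" by (simp add: frontier_def)
  then have "f p = c" using continuous_constant_on_closure[OF D(4) c] by blast
  moreover have "f z = c" using c z by blast
  ultimately show False using D(5)[OF p] ge RM by simp
qed

definition Pset :: "(complex \<Rightarrow> complex) \<Rightarrow> complex set \<Rightarrow> nat \<Rightarrow> complex set" where
  "Pset f S j = {z \<in> S. \<forall>k\<in>{1..j}. (f^^k) z \<in> S}"

lemma Pset_Suc: "Pset f S (Suc j) = {z \<in> Pset f S j. (f^^Suc j) z \<in> S}"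
proof -
  have "{1..Suc j} = insert (Suc j) {1..j}" by auto
  then show ?thesis unfolding Pset_def by (auto simp del: funpow.simps)
qed

lemma Pset_mem: "z \<in> Pset f S j \<Longrightarrow> k \<le> j \<Longrightarrow> (f^^k) z \<in> S"
  unfolding Pset_def by (cases "k = 0") auto

lemma Pset_mono: "S \<subseteq> T \<Longrightarrow> Pset f S j \<subseteq> Pset f T j"
  unfolding Pset_def by auto

lemma Pset_open:
  assumes "open S" "f holomorphic_on S"
  shows "open (Pset f S j) \<and> (\<forall>k \<le> Suc j. (f^^k) holomorphic_on Pset f S j)"
proof (induction j)
  case 0
  have P0: "Pset f S 0 = S" by (simp add: Pset_def)
  have "(f^^k) holomorphic_on S" if "k \<le> Suc 0" for k
  proof (cases k)
    case 0 then show ?thesis by (simp add: holomorphic_on_ident id_def)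
  next
    case (Suc k') then have "k = 1" using that by simp
    then show ?thesis using assms by simp
  qed
  then show ?case using assms P0 by simp
next
  case (Suc j)
  have hol: "(f^^Suc j) holomorphic_on Pset f S j" using Suc le_refl by blast
  have op: "open (Pset f S (Suc j))"
  proof -
    have "Pset f S (Suc j) = Pset f S j \<inter> (f^^Suc j) -` S" by (auto simp: Pset_Suc)
    then show ?thesis
      using continuous_open_preimage[OF holomorphic_on_imp_continuous_on[OF hol]] Suc assms(1) by simp
  qed
  have sub: "Pset f S (Suc j) \<subseteq> Pset f S j" by (auto simp: Pset_Suc)
  have "(f^^k) holomorphic_on Pset f S (Suc j)" if "k \<le> Suc (Suc j)" for k
  proof (cases "k \<le> Suc j")
    case True then show ?thesis using Suc holomorphic_on_subset[OF _ sub] by blast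
  next
    case False
    then have k: "k = Suc (Suc j)" using that by simp
    have hc: "(f \<circ> (f^^Suc j)) holomorphic_on Pset f S (Suc j)"
      by (rule holomorphic_on_compose_gen[OF holomorphic_on_subset[OF hol sub] assms(2)])
         (auto simp: Pset_Suc)
    have eq: "f^^k = f \<circ> (f^^Suc j)" using k by (simp only: funpow.simps(2))
    show ?thesis unfolding eq by (rule hc)
  qed
  then show ?case using op by blast
qed

lemma Pset_closed:
  assumes "closed S" "continuous_on S f" "f ` S \<subseteq> UNIV"
  shows "closed (Pset f S j) \<and> (\<forall>k \<le> Suc j. continuous_on (Pset f S j) (f^^k))"
proof (induction j)
  case 0
  have P0: "Pset f S 0 = S" by (simp add: Pset_def)
  have "continuous_on S (f^^k)" if "k \<le> Suc 0" for k
  proof (cases k)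
    case 0 then show ?thesis by (simp add: continuous_on_id id_def)
  next
    case (Suc k') then have "k = 1" using that by simp
    then show ?thesis using assms by simp
  qed
  then show ?case using assms P0 by simp
next
  case (Suc j)
  have con: "continuous_on (Pset f S j) (f^^Suc j)" using Suc le_refl by blast
  have cl: "closed (Pset f S (Suc j))"
  proof -
    have "Pset f S (Suc j) = Pset f S j \<inter> (f^^Suc j) -` S" by (auto simp: Pset_Suc)
    then show ?thesis
      using continuous_closed_preimage[OF con] Suc assms(1) by simp
  qed
  have sub: "Pset f S (Suc j) \<subseteq> Pset f S j" by (auto simp: Pset_Suc)
  have "continuous_on (Pset f S (Suc j)) (f^^k)" if "k \<le> Suc (Suc j)" for k
  proof (cases "k \<le> Suc j")
    case True then show ?thesis using Suc continuous_on_subset[OF _ sub] by blast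
  next
    case False
    then have k: "k = Suc (Suc j)" using that by simp
    have hc: "continuous_on (Pset f S (Suc j)) (f \<circ> (f^^Suc j))"
      by (rule continuous_on_compose[OF continuous_on_subset[OF con sub] continuous_on_subset[OF assms(2)]])
         (auto simp: Pset_Suc)
    have eq: "f^^k = f \<circ> (f^^Suc j)" using k by (simp only: funpow.simps(2))
    show ?thesis unfolding eq by (rule hc)
  qed
  then show ?case using cl by blast
qed


lemma funpow_Suc_app: "(f^^Suc k) z = f ((f^^k) z)"
  by simp

declare funpow.simps(2)[simp del]

theorem theorem3p3:
  fixes f :: "complex \<Rightarrow> complex" and D :: "complex set" and R \<rho>0 :: real
  assumes "direct_tract f D R"
    and "\<rho>0 > R"
    and "\<forall>\<rho>. \<rho> > \<rho>0 \<longrightarrow> MD f D \<rho> > \<rho>"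
  shows "\<forall>\<rho>. \<rho> > \<rho>0 \<longrightarrow> (\<forall>C \<in> components (A_tract f D \<rho>). \<not> bounded C)"
proof (intro allI impI ballI)
  fix \<rho> C
  assume \<rho>: "\<rho> > \<rho>0" and C: "C \<in> components (A_tract f D \<rho>)"
  note dt = assms(1)
  note DF = dt_facts[OF dt]
  define \<mu> where "\<mu> = (\<lambda>n. (MD f D ^^ n) \<rho>)"
  have \<mu>S: "\<mu> (Suc n) = MD f D (\<mu> n)" for n by (simp add: \<mu>_def funpow_Suc_app)
  have \<mu>ge: "\<mu> n \<ge> \<rho>" for n
  proof (induction n)
    case 0 then show ?case by (simp add: \<mu>_def)
  next
    case (Suc n)
    then have "MD f D (\<mu> n) > \<mu> n" using assms(3) \<rho> by auto
    then show ?case using Suc \<mu>S by simp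
  qed
  have \<mu>inc: "\<mu> (Suc n) > \<mu> n" for n using assms(3) \<rho> \<mu>ge[of n] \<mu>S by auto
  have RM\<mu>: "R < MD f D (\<mu> n)" for n using \<mu>inc[of n] \<mu>ge[of n] \<mu>S[of n] \<rho> assms(2) by simp
  have \<mu>R: "\<mu> n > R" for n using \<mu>ge[of n] \<rho> assms(2) by simp
  define A where "A = A_tract f D \<rho>"
  have Aeq: "A = {z \<in> D. \<forall>n. n \<ge> 1 \<longrightarrow> (f^^n) z \<in> D \<and> \<mu> n \<le> norm ((f^^n) z)}"
    by (simp add: A_def A_tract_def \<mu>_def)
  define \<delta> where "\<delta> = \<rho> - \<rho>0"
  have \<delta>: "\<delta> > 0" using \<rho> by (simp add: \<delta>_def)
  define \<epsilon> where "\<epsilon> = (\<lambda>m::nat. \<delta> / real (m+2))"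
  have \<epsilon>pos: "\<epsilon> m > 0" for m using \<delta> by (simp add: \<epsilon>_def)
  have \<epsilon>lt: "\<epsilon> m < \<delta>" for m
  proof -
    have "\<delta> * 1 < \<delta> * real (m+2)" using \<delta> by (intro mult_strict_left_mono) auto
    then show ?thesis unfolding \<epsilon>_def by (subst pos_divide_less_eq) auto
  qed
  have \<epsilon>mono: "\<epsilon> (Suc m) \<le> \<epsilon> m" for m using \<delta> by (simp add: \<epsilon>_def frac_le)
  have \<mu>\<epsilon>R: "\<mu> k - \<epsilon> m > R" for k m
    using \<mu>ge[of k] \<epsilon>lt[of m] assms(2) by (simp add: \<delta>_def)
  define F where "F = (\<lambda>m. {z \<in> Pset f (closure D) m. \<forall>k\<in>{1..Suc m}. \<mu> k - \<epsilon> m \<le> norm ((f^^k) z)})"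
  have PC: "closed (Pset f (closure D) m) \<and> (\<forall>k \<le> Suc m. continuous_on (Pset f (closure D) m) (f^^k))" for m
    by (rule Pset_closed) (use DF in auto)
  have PO: "open (Pset f D m) \<and> (\<forall>k \<le> Suc m. (f^^k) holomorphic_on Pset f D m)" for m
    by (rule Pset_open) (use DF in auto)
  have Fclosed: "closed (F m)" for m
  proof -
    have eq: "F m = Pset f (closure D) m \<inter>
       (\<Inter>k\<in>{1..Suc m}. Pset f (closure D) m \<inter> (\<lambda>z. norm ((f^^k) z)) -` {\<mu> k - \<epsilon> m..})"
      by (auto simp: F_def)
    have cl: "closed (Pset f (closure D) m \<inter> (\<lambda>z. norm ((f^^k) z)) -` {\<mu> k - \<epsilon> m..})"
      if "k \<in> {1..Suc m}" for k
      using PC[of m] that by (intro continuous_closed_preimage continuous_on_norm) auto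
    show ?thesis unfolding eq
      by (rule closed_Int[OF conjunct1[OF PC[of m]] closed_INT]) (use cl in blast)
  qed
  have Fanti: "F (Suc m) \<subseteq> F m" for m
  proof
    fix z assume z: "z \<in> F (Suc m)"
    have "z \<in> Pset f (closure D) m" using z by (auto simp: F_def Pset_Suc)
    moreover have "\<mu> k - \<epsilon> m \<le> norm ((f^^k) z)" if "k \<in> {1..Suc m}" for k
      using z that \<epsilon>mono[of m] unfolding F_def by force
    ultimately show "z \<in> F m" by (simp add: F_def)
  qed
  have Fanti': "m \<le> n \<Longrightarrow> F n \<subseteq> F m" for m n
    using lift_Suc_antimono_le[of F, OF Fanti] by blast
  \<comment> \<open>points of closure D with large image are in D\<close>
  have inD: "(f^^k) z \<in> D" if "z \<in> F m" "k \<le> m" for z m k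
  proof -
    have "(f^^k) z \<in> closure D" using that Pset_mem by (auto simp: F_def)
    moreover have "\<mu> (Suc k) - \<epsilon> m \<le> norm ((f^^Suc k) z)"
      using that unfolding F_def by auto
    then have "norm (f ((f^^k) z)) > R" using \<mu>\<epsilon>R[of "Suc k" m] by (simp add: funpow_Suc_app)
    ultimately show ?thesis using closure_in_D[OF dt] by blast
  qed
  have AF: "A \<subseteq> F m" for m
  proof
    fix z assume z: "z \<in> A"
    then have "z \<in> Pset f D m" by (auto simp: Aeq Pset_def)
    then have "z \<in> Pset f (closure D) m" using Pset_mono[OF closure_subset[of D]] by blast
    moreover have "\<mu> k - \<epsilon> m \<le> norm ((f^^k) z)" if "k \<in> {1..Suc m}" for k
      using z that \<epsilon>pos[of m] by (force simp: Aeq)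
    ultimately show "z \<in> F m" by (simp add: F_def)
  qed
  have FA: "(\<Inter>m. F m) \<subseteq> A"
  proof
    fix z assume z: "z \<in> (\<Inter>m. F m)"
    have big: "\<mu> n \<le> norm ((f^^n) z)" if "n \<ge> 1" for n
    proof (rule ccontr)
      assume "\<not> ?thesis"
      then have gap: "\<mu> n - norm ((f^^n) z) > 0" by simp
      obtain m0 :: nat where m0: "\<delta> / (\<mu> n - norm ((f^^n) z)) < real m0"
        using reals_Archimedean2 by blast
      define m where "m = max m0 n"
      have "\<delta> / (\<mu> n - norm ((f^^n) z)) < real m + 2" using m0 by (simp add: m_def)
      then have "\<delta> < (\<mu> n - norm ((f^^n) z)) * (real m + 2)"
        using gap by (simp add: divide_less_eq mult.commute)
      then have "\<epsilon> m < \<mu> n - norm ((f^^n) z)"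
        by (simp add: \<epsilon>_def divide_less_eq add.commute)
      moreover have "\<mu> n - \<epsilon> m \<le> norm ((f^^n) z)"
        using z that unfolding F_def m_def by force
      ultimately show False by simp
    qed
    have zF: "z \<in> F n" for n using z by blast
    have "(f^^n) z \<in> D" if "n \<ge> 1" for n using inD[OF zF[of n]] by simp
    moreover have "z \<in> D" using inD[OF zF[of 0], of 0] by simp
    ultimately show "z \<in> A" using big by (simp add: Aeq)
  qed
  have AI: "A = (\<Inter>m. F m)" using AF FA by blast
  have Aclosed: "closed A" using AI Fclosed by (simp add: closed_INT)
  show "\<not> bounded C"
  proof
    assume bC: "bounded C"
    have CA: "C \<in> components A" using C by (simp add: A_def)
    have cC: "compact C" using closed_components[OF Aclosed CA] bC
      by (simp add: compact_eq_bounded_closed)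
    obtain K where K: "openin (top_of_set A) K" "compact K" "C \<subseteq> K"
      using Sura_Bura_clopen_subset[OF closed_imp_locally_compact[OF Aclosed] CA cC open_UNIV]
      by blast
    have "closedin (top_of_set A) (A - K)"
      using K(1) by (simp add: closedin_diff)
    then have cAK: "closed (A - K)" using Aclosed closedin_closed_trans by blast
    obtain U V where UV: "open U" "compact (closure U)" "open V" "K \<subseteq> U" "A - K \<subseteq> V" "U \<inter> V = {}"
      using separation_normal_compact[OF K(2) cAK] by blast
    have frU: "frontier U \<inter> A = {}"
    proof -
      have "V \<inter> closure U = {}" using UV open_Int_closure_eq_empty[of V U] by blast
      then show ?thesis using UV by (auto simp: frontier_def interior_open)
    qed
    have bU: "bounded U"
      using UV(2) compact_imp_bounded bounded_subset closure_subset by blast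
    have cfrU: "compact (frontier U)"
    proof -
      have "frontier U = closure U \<inter> frontier U" by (auto simp: frontier_def)
      then show ?thesis using compact_Int_closed[OF UV(2) frontier_closed[of U]] by metis
    qed
    obtain m where m: "frontier U \<inter> F m = {}"
    proof (rule ccontr)
      assume "\<not> thesis"
      then have ne: "frontier U \<inter> F m \<noteq> {}" for m using that by blast
      have "frontier U \<inter> (\<Inter>i\<in>UNIV. F i) \<noteq> {}"
      proof (rule compact_imp_fip_image[OF cfrU Fclosed])
        fix I' :: "nat set" assume I': "finite I'" "I' \<subseteq> UNIV"
        show "frontier U \<inter> (\<Inter>i\<in>I'. F i) \<noteq> {}"
        proof (cases "I' = {}")
          case True then show ?thesis using ne[of 0] by auto
        next
          case False
          have "F (Max I') \<subseteq> (\<Inter>i\<in>I'. F i)" by (rule INT_greatest, rule Fanti', rule Max_ge[OF I'(1)])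
          then show ?thesis using ne[of "Max I'"] by blast
        qed
      qed
      then show False using AI frU by auto
    qed
    define N where "N = Suc m"
    define e where "e = \<epsilon> m"
    obtain z0 where z0C: "z0 \<in> C" using CA in_components_nonempty by blast
    have z0A: "z0 \<in> A" using z0C CA in_components_subset by blast
    have z0U: "z0 \<in> U" using z0C K(3) UV(4) by blast
    define Op where "Op = U \<inter> {z \<in> Pset f D m. \<forall>k\<in>{1..N}. \<mu> k - e < norm ((f^^k) z)}"
    have Oopen: "open Op"
    proof -
      have eq: "Op = U \<inter> (Pset f D m \<inter>
         (\<Inter>k\<in>{1..N}. Pset f D m \<inter> (\<lambda>z. norm ((f^^k) z)) -` {\<mu> k - e<..}))"
        by (auto simp: Op_def)
      have op: "open (Pset f D m \<inter> (\<lambda>z. norm ((f^^k) z)) -` {\<mu> k - e<..})"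
        if "k \<in> {1..N}" for k
        using PO[of m] that unfolding N_def
        by (intro continuous_open_preimage continuous_on_norm holomorphic_on_imp_continuous_on) auto
      show ?thesis unfolding eq
        by (rule open_Int[OF UV(1) open_Int[OF conjunct1[OF PO[of m]] open_INT]]) (use op in auto)
    qed
    have z0O: "z0 \<in> Op"
    proof -
      have "z0 \<in> Pset f D m" using z0A by (auto simp: Aeq Pset_def)
      moreover have "\<mu> k - e < norm ((f^^k) z0)" if "k \<in> {1..N}" for k
        using z0A that \<epsilon>pos[of m] by (force simp: Aeq e_def)
      ultimately show ?thesis using z0U by (simp add: Op_def)
    qed
    have OpF: "Op \<subseteq> F m"
    proof
      fix z assume "z \<in> Op"
      then show "z \<in> F m" using Pset_mono[of D "closure D" f m] closure_subset
        by (force simp: Op_def F_def N_def e_def)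
    qed
    define W where "W = connected_component_set Op z0"
    have Wopen: "open W" using Oopen by (simp add: W_def open_connected_component)
    have WO: "W \<subseteq> Op" by (simp add: W_def connected_component_subset)
    have z0W: "z0 \<in> W" using z0O by (simp add: W_def)
    have OpU: "Op \<subseteq> U" "Op \<subseteq> Pset f D m" by (auto simp: Op_def)
    have bW: "bounded W" using bounded_subset[OF bU] WO OpU(1) by blast
    define g where "g = f^^N"
    have holg: "g holomorphic_on W"
    proof -
      have "(f^^Suc m) holomorphic_on Pset f D m" using PO[of m] le_refl by blast
      then show ?thesis unfolding g_def N_def using WO OpU(2) holomorphic_on_subset by blast
    qed
    have clW: "closure W \<subseteq> F m"
      using WO OpF Fclosed closure_minimal by blast
    have cong: "continuous_on (F m) g"
    proof -
      have "continuous_on (Pset f (closure D) m) (f^^Suc m)" using PC[of m] le_refl by blast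
      moreover have "F m \<subseteq> Pset f (closure D) m" by (auto simp: F_def)
      ultimately show ?thesis unfolding g_def N_def using continuous_on_subset by blast
    qed
    have frW: "norm (g z) < \<mu> N" if z: "z \<in> frontier W" for z
    proof -
      have zF: "z \<in> F m" using z clW by (auto simp: frontier_def)
      have "frontier W \<subseteq> frontier Op" unfolding W_def by (rule frontier_of_connected_component_subset)
      then have znO: "z \<notin> Op" using z Oopen by (auto simp: frontier_def interior_open)
      have "z \<in> closure U"
        using z WO closure_mono[of W U] unfolding frontier_def Op_def by blast
      then have zU: "z \<in> U" using zF m UV(1) by (auto simp: frontier_def interior_open)
      have zD: "(f^^k) z \<in> D" if "k \<le> m" for k using inD[OF zF that] .
      have zP: "z \<in> Pset f D m" using zD zD[of 0] by (auto simp: Pset_def)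
      then obtain k where k: "k \<in> {1..N}" "norm ((f^^k) z) \<le> \<mu> k - e"
        using znO zU by (force simp: Op_def)
      have propg: "norm ((f^^(k+d)) z) < \<mu> (k+d)" if "k + d \<le> N" for d
        using that
      proof (induction d)
        case 0 then show ?case using k \<epsilon>pos[of m] by (simp add: e_def)
      next
        case (Suc d)
        then have "(f^^(k+d)) z \<in> D" using zD by (simp add: N_def)
        from MM_strict[OF dt RM\<mu>[of "k+d"] this] Suc
        show ?case by (simp add: \<mu>S funpow_Suc_app)
      qed
      have "k + (N - k) = N" using k by simp
      then show ?thesis using propg[of "N - k"] by (simp add: g_def)
    qed
    have frWne: "frontier W \<noteq> {}"
    proof -
      have "W \<noteq> UNIV" using bW not_bounded_UNIV by metis
      moreover have "W \<noteq> {}" using z0W by blast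
      ultimately show ?thesis using frontier_not_empty[of W] by blast
    qed
    have frWc: "compact (frontier W)"
    proof -
      have "frontier W = closure W \<inter> frontier W" by (auto simp: frontier_def)
      moreover have "compact (closure W)" using bW by (simp add: compact_closure)
      ultimately show ?thesis using compact_Int_closed[OF _ frontier_closed[of W]] by metis
    qed
    have "continuous_on (frontier W) (\<lambda>z. norm (g z))"
      using cong clW by (intro continuous_on_norm) (auto simp: frontier_def intro: continuous_on_subset)
    then obtain p where p: "p \<in> frontier W" "\<And>y. y \<in> frontier W \<Longrightarrow> norm (g y) \<le> norm (g p)"
      using continuous_attains_sup[OF frWc frWne] by blast
    have "norm (g z0) \<le> norm (g p)"
    proof (rule maximum_modulus_frontier[of g W])
      show "g holomorphic_on interior W" using holg Wopen by (simp add: interior_open)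
      show "continuous_on (closure W) g" using cong clW continuous_on_subset by blast
    qed (use bW p z0W in auto)
    moreover have "norm (g p) < \<mu> N" using frW p by blast
    moreover have "\<mu> N \<le> norm (g z0)" using z0A by (simp add: Aeq g_def N_def)
    ultimately show False by simp
  qed
qed

end
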